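(* Let $q$ satisfy condition $\mathbf{A}$ for $x\ge x_0$ (for some $x_0\ge 0$). Then the set $\mathscr{N}$ is a non-empty open subset of $\mathbb{C}$ (indeed $0\in\mathscr{N}$). Moreover, $\mathscr{N}=\mathbb{C}$ if and only if $|q(x)|\to+\infty$ as $x\to+\infty$.
   Context: $\mathbb{R}_+=[0,+\infty)$. For $\kappa\ge 0$ let $\Pi_\kappa=\{z\in\mathbb{C}: z\neq 0,\ \arg z\in(-\pi+\kappa,\pi-\kappa)\}$. A complex-valued function $q$ on $\mathbb{R}_+$ is said to satisfy condition $\mathbf{A}$ for $x\ge x_0$ if: (i) $q\in L_{1,loc}(\mathbb{R}_+)$ and $q$ is locally absolutely continuous on $[x_0,+\infty)$; (ii) $q([x_0,+\infty))\subset\Pi_\kappa$ for some $\kappa\ge0$; (iii) there is a constant $C>0$ such that for a.e. $x\ge x_0$, $$\operatorname{Re}p(x)\ge C+\frac12\Bigl|\frac{p'(x)}{p(x)}\Bigr|,$$ where $p(x)=\sqrt{q(x)}$ with the branch chosen so that $\operatorname{Re}p(x)>0$ for $x\ge x_0$. The set $\mathscr{N}$ is the set of those $\lambda\in\mathbb{C}$ for which $q_\lambda=q-\lambda$ satisfies condition $\mathbf{A}$ for $x\ge x_0(\lambda)$ for some $x_0(\lambda)\ge0$ (depending on $\lambda$). *)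

theory Defs
  imports "HOL-Analysis.Analysis"
begin

definition abs_cont_on_interval :: "(real \<Rightarrow> 'b::real_normed_vector) \<Rightarrow> real \<Rightarrow> real \<Rightarrow> bool" where
  "abs_cont_on_interval f a b \<longleftrightarrow>
     (\<forall>\<epsilon>>0. \<exists>\<delta>>0. \<forall>(n::nat) (s::nat \<Rightarrow> real) (t::nat \<Rightarrow> real).
        (\<forall>i<n. a \<le> s i \<and> s i \<le> t i \<and> t i \<le> b) \<and>
        (\<forall>i<n. \<forall>j<n. i \<noteq> j \<longrightarrow> {s i<..<t i} \<inter> {s j<..<t j} = {}) \<and>
        (\<Sum>i<n. t i - s i) < \<delta>
        \<longrightarrow> (\<Sum>i<n. norm (f (t i) - f (s i))) < \<epsilon>)"

definition loc_abs_cont_from :: "(real \<Rightarrow> 'b::real_normed_vector) \<Rightarrow> real \<Rightarrow> bool" where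
  "loc_abs_cont_from f x0 \<longleftrightarrow> (\<forall>b\<ge>x0. abs_cont_on_interval f x0 b)"

definition loc_integrable_Rplus :: "(real \<Rightarrow> complex) \<Rightarrow> bool" where
  "loc_integrable_Rplus f \<longleftrightarrow> (\<forall>b\<ge>0. set_integrable lborel {0..b} f)"

text \<open>The sector Pi_kappa = {z /= 0, arg z in (-pi+kappa, pi-kappa)}; Arg has range (-pi,pi].\<close>
definition sector :: "real \<Rightarrow> complex set" where
  "sector \<kappa> = {z. z \<noteq> 0 \<and> -pi + \<kappa> < Arg z \<and> Arg z < pi - \<kappa>}"

text \<open>Condition A for x >= x0. The branch p = sqrt q with Re p > 0 is csqrt (principal root),
which has positive real part on every sector Pi_kappa.\<close>
definition condA :: "(real \<Rightarrow> complex) \<Rightarrow> real \<Rightarrow> bool" where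
  "condA q x0 \<longleftrightarrow>
     loc_integrable_Rplus q \<and>
     loc_abs_cont_from q x0 \<and>
     (\<exists>\<kappa>\<ge>0. \<forall>x\<ge>x0. q x \<in> sector \<kappa>) \<and>
     (\<exists>C>0. AE x in lborel. x \<ge> x0 \<longrightarrow>
        (\<exists>dp. ((\<lambda>t. csqrt (q t)) has_vector_derivative dp) (at x) \<and>
             Re (csqrt (q x)) \<ge> C + 1/2 * cmod (dp / csqrt (q x))))"

definition setN :: "(real \<Rightarrow> complex) \<Rightarrow> complex set" where
  "setN q = {l. \<exists>x0\<ge>0. condA (\<lambda>x. q x - l) x0}"

end

theory Submission imports Defs begin
lemma const_si: "set_integrable lborel {0..b::real} (\<lambda>x. c::complex)"
  unfolding set_integrable_def
  by (rule integrable_indicator) (auto simp: emeasure_lborel_Icc_eq)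

lemma key_alg:
  fixes s s' \<nu> :: complex and C D :: real
  assumes C: "C > 0" and R: "Re s \<ge> C + D" and D: "D \<ge> 0"
    and sq: "s'^2 = s^2 - \<nu>" and Rs': "Re s' \<ge> 0"
    and big: "cmod s \<ge> 10 * cmod \<nu> / C"
  shows "s' \<noteq> 0 \<and> Re s' \<ge> C/2 + D * (cmod s)^2 / (cmod s')^2"
proof -
  define a where "a = cmod s"
  define b where "b = cmod s'"
  define n where "n = cmod \<nu>"
  define e where "e = cmod (s - s')"
  define p where "p = cmod (s + s')"
  have aC: "a \<ge> C" using R D complex_Re_le_cmod[of s] unfolding a_def by linarith
  have a0: "a > 0" using aC C by linarith
  have n0: "n \<ge> 0" unfolding n_def by simp
  have bign: "n \<le> C * a / 10" using big C unfolding a_def n_def by (simp add: field_simps)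
  have "(s - s') * (s + s') = \<nu>" using sq by (simp add: power2_eq_square algebra_simps)
  then have ep: "e * p = n" unfolding e_def p_def n_def by (metis norm_mult)
  have "Re (s + s') \<le> p" unfolding p_def by (rule complex_Re_le_cmod)
  then have pC: "p \<ge> C" using R D Rs' by simp
  have e0: "e \<ge> 0" unfolding e_def by simp
  have "e * C \<le> e * p" using pC e0 by (rule mult_left_mono)
  then have e1: "e \<le> n / C" using ep C by (simp add: pos_le_divide_eq)
  have "C * e \<le> n" using e1 C by (simp add: field_simps)
  moreover have "n * 10 \<le> C * a" using bign by (simp add: field_simps)
  ultimately have "C * (e * 10) \<le> C * a" by (simp add: algebra_simps)
  then have e2: "e \<le> a / 10" using C by (simp add: mult_le_cancel_left_pos)
  have "cmod (2 * s) \<le> p + e" unfolding p_def e_def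
    using norm_triangle_ineq[of "s + s'" "s - s'"] by (simp add: algebra_simps)
  then have "2 * a \<le> p + e" unfolding a_def by (simp add: norm_mult)
  then have pa: "p \<ge> a" using e2 a0 by linarith
  have "e * a \<le> e * p" using pa e0 by (rule mult_left_mono)
  then have en: "e \<le> n / a" using ep a0 by (simp add: pos_le_divide_eq)
  have "a \<le> b + e" unfolding a_def b_def e_def using norm_triangle_ineq[of "s - s'" s'] by simp
  then have ba: "b \<ge> 9/10 * a" using e2 by linarith
  have b0: "b > 0" using ba a0 by linarith
  have "Re (s - s') \<le> e" unfolding e_def by (rule complex_Re_le_cmod)
  then have Re1: "Re s' \<ge> Re s - n / a" using en by simp
  have "a^2 = cmod (s^2)" unfolding a_def by (simp add: norm_power)
  also have "\<dots> = cmod (s'^2 + \<nu>)" using sq by simp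
  also have "\<dots> \<le> b^2 + n" unfolding b_def n_def using norm_triangle_ineq[of "s'^2" \<nu>] by (simp add: norm_power)
  finally have abn: "a^2 \<le> b^2 + n" .
  have DA: "D \<le> a" using R complex_Re_le_cmod[of s] C unfolding a_def by linarith
  have "D * a^2 / b^2 \<le> D * (b^2 + n) / b^2"
    using abn D b0 by (intro divide_right_mono mult_left_mono) auto
  also have "\<dots> = D + D * n / b^2" using b0 by (simp add: field_simps)
  also have "D * n / b^2 \<le> a * n / b^2" using DA n0 b0 by (intro divide_right_mono mult_right_mono) auto
  also have "a * n / b^2 \<le> a * n / (81/100 * a^2)"
  proof -
    have "81/100 * a^2 \<le> b^2" proof -
      have "(9/10 * a)^2 \<le> b^2" using ba a0 by (intro power_mono) auto
      moreover have "(9/10 * a)^2 = 81/100 * a^2" by (simp add: power2_eq_square)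
      ultimately show ?thesis by simp
    qed
    then show ?thesis using a0 n0 b0 by (intro divide_left_mono) auto
  qed
  also have "\<dots> = 100/81 * (n / a)" using a0 by (simp add: field_simps power2_eq_square)
  finally have DD: "D * a^2 / b^2 \<le> D + 100/81 * (n / a)" by simp
  have na: "n / a \<le> C / 10" using bign a0 by (simp add: field_simps)
  have "Re s' \<ge> C/2 + D * a^2 / b^2" using Re1 DD na R C by linarith
  then show ?thesis using b0 unfolding a_def b_def by auto
qed


lemma Re_csqrt_pos_sector: "Re (csqrt z) > 0 \<Longrightarrow> z \<noteq> 0 \<and> -pi + 0 < Arg z \<and> Arg z < pi - 0"
proof -
  assume a: "Re (csqrt z) > 0"
  have "z \<noteq> 0" using a by auto
  moreover have "Arg z \<noteq> pi"
  proof
    assume "Arg z = pi"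
    then have "Re z < 0" "Im z = 0" using Arg_eq_pi by auto
    then show False using a by simp
  qed
  ultimately show ?thesis using Arg_bounded[of z] by auto
qed

lemma Re_csqrt_pos_nonpos: "Re (csqrt z) > 0 \<Longrightarrow> z \<notin> \<real>\<^sub>\<le>\<^sub>0"
  by (auto simp: nonpos_Reals_def)

lemma deriv_shift:
  fixes f :: "real \<Rightarrow> complex"
  assumes d: "((\<lambda>t. csqrt (f t)) has_vector_derivative dp) (at x)"
    and p: "Re (csqrt (f x - \<nu>)) > 0"
  shows "((\<lambda>t. csqrt (f t - \<nu>)) has_vector_derivative
            (csqrt (f x) * dp / csqrt (f x - \<nu>))) (at x)"
proof -
  let ?h = "\<lambda>t. csqrt (f t)"
  have d2: "((\<lambda>t. (?h t)^2 - \<nu>) has_vector_derivative (2 * csqrt (f x) * dp)) (at x)"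
    using d by (auto intro!: derivative_eq_intros simp: power2_eq_square)
  have c: "(csqrt has_field_derivative inverse (2 * csqrt (f x - \<nu>))) (at ((\<lambda>t. (?h t)^2 - \<nu>) x))"
    using has_field_derivative_csqrt[OF Re_csqrt_pos_nonpos[OF p]] by simp
  have "((csqrt \<circ> (\<lambda>t. (?h t)^2 - \<nu>)) has_vector_derivative
          (2 * csqrt (f x) * dp) * inverse (2 * csqrt (f x - \<nu>))) (at x)"
    by (rule field_vector_diff_chain_at[OF d2 c])
  moreover have "(2 * csqrt (f x) * dp) * inverse (2 * csqrt (f x - \<nu>)) = csqrt (f x) * dp / csqrt (f x - \<nu>)"
    by (simp add: field_simps)
  ultimately show ?thesis by (simp add: o_def)
qed

lemma lac_cont:
  assumes "loc_abs_cont_from g x0"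
  shows "continuous_on {x0..} (g :: real \<Rightarrow> complex)"
  unfolding continuous_on_iff
proof (intro ballI allI impI)
  fix y e :: real assume y: "y \<in> {x0..}" and e: "e > 0"
  have "abs_cont_on_interval g x0 (y+1)" using assms y unfolding loc_abs_cont_from_def by auto
  then obtain d where d: "d > 0" and H: "\<forall>(n::nat) (s::nat \<Rightarrow> real) (t::nat \<Rightarrow> real).
        (\<forall>i<n. x0 \<le> s i \<and> s i \<le> t i \<and> t i \<le> y+1) \<and>
        (\<forall>i<n. \<forall>j<n. i \<noteq> j \<longrightarrow> {s i<..<t i} \<inter> {s j<..<t j} = {}) \<and>
        (\<Sum>i<n. t i - s i) < d \<longrightarrow> (\<Sum>i<n. norm (g (t i) - g (s i))) < e"
    using e unfolding abs_cont_on_interval_def by (elim allE[of _ e] impE) auto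
  show "\<exists>d>0. \<forall>z\<in>{x0..}. dist z y < d \<longrightarrow> dist (g z) (g y) < e"
  proof (intro exI[of _ "min d 1"] conjI ballI impI)
    fix z assume z: "z \<in> {x0..}" and dz: "dist z y < min d 1"
    define a where "a = min y z"
    define b where "b = max y z"
    have c1: "\<forall>i<(1::nat). x0 \<le> (\<lambda>_. a) i \<and> (\<lambda>_. a) i \<le> (\<lambda>_. b) i \<and> (\<lambda>_. b) i \<le> y+1"
      using y z dz by (auto simp: a_def b_def dist_real_def)
    have c2: "\<forall>i<(1::nat). \<forall>j<1. i \<noteq> j \<longrightarrow> {(\<lambda>_. a) i<..<(\<lambda>_. b) i} \<inter> {(\<lambda>_. a) j<..<(\<lambda>_. b) j} = {}"
      by auto
    have c3: "(\<Sum>i<(1::nat). (\<lambda>_. b) i - (\<lambda>_. a) i) < d"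
      using dz by (auto simp: a_def b_def dist_real_def)
    have "(\<Sum>i<(1::nat). norm (g ((\<lambda>_. b) i) - g ((\<lambda>_. a) i))) < e"
      by (rule H[rule_format, OF conjI[OF c1 conjI[OF c2 c3]]])
    then have "norm (g b - g a) < e" by simp
    then show "dist (g z) (g y) < e"
      by (cases "y \<le> z") (auto simp: a_def b_def dist_norm norm_minus_commute)
  qed (use d in auto)
qed

lemma Re_csqrt_cont: "continuous_on S (\<lambda>x. Re (csqrt (g x)))" if "continuous_on S g" for g :: "real \<Rightarrow> complex"
  using that by (auto intro!: continuous_intros)

lemma everywhere:
  fixes g :: "real \<Rightarrow> complex"
  assumes cont: "continuous_on {x0..} g"
    and ae: "AE x in lborel. x \<ge> x0 \<longrightarrow> Re (csqrt (g x)) \<ge> C"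
    and x: "x \<ge> x0"
  shows "Re (csqrt (g x)) \<ge> C"
proof (rule ccontr)
  assume "\<not> Re (csqrt (g x)) \<ge> C"
  then have lt: "Re (csqrt (g x)) < C" by simp
  have hc: "continuous_on {x0..} (\<lambda>x. Re (csqrt (g x)))" using cont by (rule Re_csqrt_cont)
  have "\<exists>d>0. \<forall>z\<in>{x0..}. dist z x < d \<longrightarrow>
       dist (Re (csqrt (g z))) (Re (csqrt (g x))) < C - Re (csqrt (g x))"
    using hc x lt unfolding continuous_on_iff by auto
  then obtain d where d: "d > 0" and dd: "\<And>z. z \<in> {x0..} \<Longrightarrow> dist z x < d \<Longrightarrow>
       dist (Re (csqrt (g z))) (Re (csqrt (g x))) < C - Re (csqrt (g x))" by blast
  have sub: "{x<..<x+d} \<subseteq> {y \<in> space lborel. \<not> (y \<ge> x0 \<longrightarrow> Re (csqrt (g y)) \<ge> C)}"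
  proof
    fix y assume y: "y \<in> {x<..<x+d}"
    then have "y \<ge> x0" using x by auto
    moreover have "dist y x < d" using y by (auto simp: dist_real_def)
    ultimately have "dist (Re (csqrt (g y))) (Re (csqrt (g x))) < C - Re (csqrt (g x))" using dd by auto
    then show "y \<in> {y \<in> space lborel. \<not> (y \<ge> x0 \<longrightarrow> Re (csqrt (g y)) \<ge> C)}"
      using \<open>y \<ge> x0\<close> by (auto simp: dist_real_def)
  qed
  from ae obtain N where N: "{y \<in> space lborel. \<not> (y \<ge> x0 \<longrightarrow> Re (csqrt (g y)) \<ge> C)} \<subseteq> N"
    "emeasure lborel N = 0" "N \<in> sets lborel" by (auto elim!: AE_E)
  have "emeasure lborel {x<..<x+d} \<le> emeasure lborel N"
    using sub N by (intro emeasure_mono) auto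
  moreover have "emeasure lborel {x<..<x+d} = ennreal d" using d by simp
  ultimately show False using N(2) d by simp
qed

lemma condA_ev:
  fixes g :: "real \<Rightarrow> complex"
  assumes A: "condA g x0"
  obtains C where "C > 0"
    "AE x in lborel. x \<ge> x0 \<longrightarrow> (\<exists>dp. ((\<lambda>t. csqrt (g t)) has_vector_derivative dp) (at x) \<and>
             Re (csqrt (g x)) \<ge> C + 1/2 * cmod (dp / csqrt (g x)))"
    "\<And>x. x \<ge> x0 \<Longrightarrow> Re (csqrt (g x)) \<ge> C"
proof -
  obtain C where C: "C > 0" and ae: "AE x in lborel. x \<ge> x0 \<longrightarrow> (\<exists>dp. ((\<lambda>t. csqrt (g t)) has_vector_derivative dp) (at x) \<and>
             Re (csqrt (g x)) \<ge> C + 1/2 * cmod (dp / csqrt (g x)))"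
    using A unfolding condA_def by blast
  have cont: "continuous_on {x0..} g" using A lac_cont unfolding condA_def by blast
  have ae2: "AE x in lborel. x \<ge> x0 \<longrightarrow> Re (csqrt (g x)) \<ge> C"
  proof (rule AE_mp[OF ae], rule AE_I2, intro impI)
    fix x assume h: "x \<ge> x0 \<longrightarrow> (\<exists>dp. ((\<lambda>t. csqrt (g t)) has_vector_derivative dp) (at x) \<and>
             Re (csqrt (g x)) \<ge> C + 1/2 * cmod (dp / csqrt (g x)))" and x: "x \<ge> x0"
    then obtain dp where "Re (csqrt (g x)) \<ge> C + 1/2 * cmod (dp / csqrt (g x))" by blast
    moreover have "0 \<le> 1/2 * cmod (dp / csqrt (g x))" by simp
    ultimately show "Re (csqrt (g x)) \<ge> C" by linarith
  qed
  show ?thesis using that[OF C ae everywhere[OF cont ae2]] by blast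
qed

lemma shift:
  fixes g :: "real \<Rightarrow> complex"
  assumes A: "condA g x0" and C: "C > 0"
   and ae: "AE x in lborel. x \<ge> x0 \<longrightarrow> (\<exists>dp. ((\<lambda>t. csqrt (g t)) has_vector_derivative dp) (at x) \<and>
             Re (csqrt (g x)) \<ge> C + 1/2 * cmod (dp / csqrt (g x)))"
   and ev: "\<And>x. x \<ge> x0 \<Longrightarrow> Re (csqrt (g x)) \<ge> C"
   and x1: "x1 \<ge> x0"
   and big: "\<And>x. x \<ge> x1 \<Longrightarrow> cmod (csqrt (g x)) \<ge> 10 * cmod \<nu> / C"
  shows "condA (\<lambda>x. g x - \<nu>) x1"
proof -
  have li: "loc_integrable_Rplus g" and lac: "loc_abs_cont_from g x0"
    using A unfolding condA_def by auto
  have pt: "s' \<noteq> 0 \<and> Re s' \<ge> C/2 + D * (cmod (csqrt (g x)))^2 / (cmod s')^2"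
    if x: "x \<ge> x1" and s': "s' = csqrt (g x - \<nu>)" and D: "D \<ge> 0" and R: "Re (csqrt (g x)) \<ge> C + D" for x D s'
  proof -
    have sq: "s'^2 = (csqrt (g x))^2 - \<nu>" by (simp add: s')
    have Rs': "Re s' \<ge> 0" by (metis s' Re_csqrt)
    show ?thesis by (rule key_alg[OF C R D sq Rs' big[OF x]])
  qed
  have pos: "Re (csqrt (g x - \<nu>)) > 0" if x: "x \<ge> x1" for x
  proof -
    have "Re (csqrt (g x - \<nu>)) \<ge> C/2 + 0 * (cmod (csqrt (g x)))^2 / (cmod (csqrt (g x - \<nu>)))^2"
      using pt[OF x refl, of 0] ev[of x] x x1 by auto
    then have "Re (csqrt (g x - \<nu>)) \<ge> C/2" by (simp only: mult_zero_left div_0 add_0_right)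
    then show ?thesis using C by linarith
  qed
  have P1: "loc_integrable_Rplus (\<lambda>x. g x - \<nu>)"
    using li unfolding loc_integrable_Rplus_def by (auto intro!: set_integral_diff(1) const_si)
  have P2: "loc_abs_cont_from (\<lambda>x. g x - \<nu>) x1"
    unfolding loc_abs_cont_from_def
  proof (intro allI impI)
    fix b assume b: "b \<ge> x1"
    have ac: "abs_cont_on_interval g x0 b" using lac b x1 unfolding loc_abs_cont_from_def by auto
    show "abs_cont_on_interval (\<lambda>x. g x - \<nu>) x1 b"
      unfolding abs_cont_on_interval_def
    proof (intro allI impI)
      fix \<epsilon> :: real assume e: "\<epsilon> > 0"
      obtain \<delta> where d: "\<delta> > 0" and H: "\<forall>(n::nat) (s::nat \<Rightarrow> real) (t::nat \<Rightarrow> real).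
        (\<forall>i<n. x0 \<le> s i \<and> s i \<le> t i \<and> t i \<le> b) \<and>
        (\<forall>i<n. \<forall>j<n. i \<noteq> j \<longrightarrow> {s i<..<t i} \<inter> {s j<..<t j} = {}) \<and>
        (\<Sum>i<n. t i - s i) < \<delta> \<longrightarrow> (\<Sum>i<n. norm (g (t i) - g (s i))) < \<epsilon>"
        using ac e unfolding abs_cont_on_interval_def by (elim allE[of _ \<epsilon>] impE) auto
      show "\<exists>\<delta>>0. \<forall>(n::nat) (s::nat \<Rightarrow> real) (t::nat \<Rightarrow> real).
        (\<forall>i<n. x1 \<le> s i \<and> s i \<le> t i \<and> t i \<le> b) \<and>
        (\<forall>i<n. \<forall>j<n. i \<noteq> j \<longrightarrow> {s i<..<t i} \<inter> {s j<..<t j} = {}) \<and>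
        (\<Sum>i<n. t i - s i) < \<delta> \<longrightarrow> (\<Sum>i<n. norm ((g (t i) - \<nu>) - (g (s i) - \<nu>))) < \<epsilon>"
      proof (intro exI[of _ \<delta>] conjI allI impI)
        fix n :: nat and s t :: "nat \<Rightarrow> real"
        assume h: "(\<forall>i<n. x1 \<le> s i \<and> s i \<le> t i \<and> t i \<le> b) \<and>
        (\<forall>i<n. \<forall>j<n. i \<noteq> j \<longrightarrow> {s i<..<t i} \<inter> {s j<..<t j} = {}) \<and>
        (\<Sum>i<n. t i - s i) < \<delta>"
        have h1: "\<forall>i<n. x0 \<le> s i \<and> s i \<le> t i \<and> t i \<le> b" using h x1 by force
        have "(\<Sum>i<n. norm (g (t i) - g (s i))) < \<epsilon>"
          using H[rule_format, of n s t] h h1 by blast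
        then show "(\<Sum>i<n. norm ((g (t i) - \<nu>) - (g (s i) - \<nu>))) < \<epsilon>" by simp
      qed (use d in auto)
    qed
  qed
  have P3: "\<exists>\<kappa>\<ge>0. \<forall>x\<ge>x1. g x - \<nu> \<in> sector \<kappa>"
    by (rule exI[of _ 0]) (auto simp: sector_def dest!: pos Re_csqrt_pos_sector)
  have P4: "AE x in lborel. x \<ge> x1 \<longrightarrow>
        (\<exists>dp. ((\<lambda>t. csqrt (g t - \<nu>)) has_vector_derivative dp) (at x) \<and>
             Re (csqrt (g x - \<nu>)) \<ge> C/2 + 1/2 * cmod (dp / csqrt (g x - \<nu>)))"
  proof (rule AE_mp[OF ae], rule AE_I2, intro impI)
    fix x assume h: "x \<ge> x0 \<longrightarrow> (\<exists>dp. ((\<lambda>t. csqrt (g t)) has_vector_derivative dp) (at x) \<and>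
             Re (csqrt (g x)) \<ge> C + 1/2 * cmod (dp / csqrt (g x)))" and x: "x \<ge> x1"
    then obtain dp where dp: "((\<lambda>t. csqrt (g t)) has_vector_derivative dp) (at x)"
      and R: "Re (csqrt (g x)) \<ge> C + 1/2 * cmod (dp / csqrt (g x))" using x1 by auto
    define s where "s = csqrt (g x)"
    define s' where "s' = csqrt (g x - \<nu>)"
    define D where "D = 1/2 * cmod (dp / s)"
    have D0: "D \<ge> 0" unfolding D_def by simp
    have k: "s' \<noteq> 0 \<and> Re s' \<ge> C/2 + D * (cmod s)^2 / (cmod s')^2"
      using pt[OF x s'_def D0] R unfolding D_def s_def by auto
    have s0: "s \<noteq> 0" using ev[of x] x x1 C unfolding s_def by auto
    have eq: "1/2 * cmod (s * dp / s' / s') = D * (cmod s)^2 / (cmod s')^2"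
      unfolding D_def using s0 k by (simp add: norm_mult norm_divide power2_eq_square field_simps)
    show "\<exists>dp. ((\<lambda>t. csqrt (g t - \<nu>)) has_vector_derivative dp) (at x) \<and>
             Re (csqrt (g x - \<nu>)) \<ge> C/2 + 1/2 * cmod (dp / csqrt (g x - \<nu>))"
      using deriv_shift[OF dp pos[OF x]] k eq unfolding s_def s'_def by auto
  qed
  show ?thesis unfolding condA_def
  proof (intro conjI P1 P2 P3)
    show "\<exists>C>0. AE x in lborel. x \<ge> x1 \<longrightarrow>
        (\<exists>dp. ((\<lambda>t. csqrt (g t - \<nu>)) has_vector_derivative dp) (at x) \<and>
             Re (csqrt (g x - \<nu>)) \<ge> C + 1/2 * cmod (dp / csqrt (g x - \<nu>)))"
      using P4 C by (intro exI[of _ "C/2"] conjI) auto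
  qed
qed

theorem lemma1:
  fixes q :: "real \<Rightarrow> complex" and x0 :: real
  assumes "x0 \<ge> 0" and "condA q x0"
  shows "0 \<in> setN q \<and> setN q \<noteq> {} \<and> open (setN q) \<and>
         (setN q = UNIV \<longleftrightarrow> filterlim (\<lambda>x. cmod (q x)) at_top at_top)"
proof -
  have z: "0 \<in> setN q" unfolding setN_def using assms by auto
  have op: "open (setN q)"
    unfolding open_contains_ball
  proof
    fix l assume "l \<in> setN q"
    then obtain x1 where x1: "x1 \<ge> 0" and A: "condA (\<lambda>x. q x - l) x1" unfolding setN_def by auto
    obtain C where C: "C > 0" and ae: "AE x in lborel. x \<ge> x1 \<longrightarrow> (\<exists>dp. ((\<lambda>t. csqrt (q t - l)) has_vector_derivative dp) (at x) \<and>
             Re (csqrt (q x - l)) \<ge> C + 1/2 * cmod (dp / csqrt (q x - l)))"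
      and ev: "\<And>x. x \<ge> x1 \<Longrightarrow> Re (csqrt (q x - l)) \<ge> C"
      using condA_ev[OF A] by blast
    show "\<exists>e>0. ball l e \<subseteq> setN q"
    proof (intro exI[of _ "C^2/10"] conjI subsetI)
      fix m assume m: "m \<in> ball l (C^2/10)"
      have nu: "cmod (m - l) < C^2/10" using m by (simp add: dist_norm norm_minus_commute)
      have big: "cmod (csqrt (q x - l)) \<ge> 10 * cmod (m - l) / C" if "x \<ge> x1" for x
      proof -
        have "10 * cmod (m - l) / C \<le> C" using nu C by (simp add: field_simps power2_eq_square)
        also have "C \<le> Re (csqrt (q x - l))" using ev[OF that] .
        also have "\<dots> \<le> cmod (csqrt (q x - l))" by (rule complex_Re_le_cmod)
        finally show ?thesis .
      qed
      have "condA (\<lambda>x. q x - l - (m - l)) x1"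
        by (rule shift[OF A C ae ev order_refl big])
      then show "m \<in> setN q" unfolding setN_def using x1 by auto
    qed (use C in auto)
  qed
  obtain C where C: "C > 0" and ae: "AE x in lborel. x \<ge> x0 \<longrightarrow> (\<exists>dp. ((\<lambda>t. csqrt (q t)) has_vector_derivative dp) (at x) \<and>
             Re (csqrt (q x)) \<ge> C + 1/2 * cmod (dp / csqrt (q x)))"
      and ev: "\<And>x. x \<ge> x0 \<Longrightarrow> Re (csqrt (q x)) \<ge> C"
      using condA_ev[OF assms(2)] by blast
  have iff: "setN q = UNIV \<longleftrightarrow> filterlim (\<lambda>x. cmod (q x)) at_top at_top"
  proof
    assume lim: "filterlim (\<lambda>x. cmod (q x)) at_top at_top"
    show "setN q = UNIV"
    proof (intro set_eqI iffI)
      fix m :: complex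
      have "eventually (\<lambda>x. (10 * cmod m / C)^2 \<le> cmod (q x)) at_top"
        using lim unfolding filterlim_at_top by blast
      then obtain N where N: "\<And>x. x \<ge> N \<Longrightarrow> (10 * cmod m / C)^2 \<le> cmod (q x)"
        unfolding eventually_at_top_linorder by blast
      have big: "cmod (csqrt (q x)) \<ge> 10 * cmod m / C" if "x \<ge> max x0 N" for x
      proof -
        have "sqrt ((10 * cmod m / C)^2) \<le> sqrt (cmod (q x))" using N[of x] that by (intro real_sqrt_le_mono) auto
        moreover have "sqrt ((10 * cmod m / C)^2) = 10 * cmod m / C" using C by simp
        ultimately show ?thesis by (simp only: norm_csqrt)
      qed
      have "condA (\<lambda>x. q x - m) (max x0 N)"
        using shift[OF assms(2) C ae ev _ big] by simp
      then show "m \<in> setN q" unfolding setN_def using assms(1)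
        by (intro CollectI exI[of _ "max x0 N"]) auto
    qed simp
  next
    assume U: "setN q = UNIV"
    show "filterlim (\<lambda>x. cmod (q x)) at_top at_top"
    proof (rule ccontr)
      assume "\<not> filterlim (\<lambda>x. cmod (q x)) at_top at_top"
      then obtain Z where nev: "\<not> eventually (\<lambda>x. Z \<le> cmod (q x)) at_top"
        unfolding filterlim_at_top by blast
      have ex: "\<forall>N. \<exists>x\<ge>N. cmod (q x) < Z"
      proof (intro allI)
        fix N :: real
        show "\<exists>x\<ge>N. cmod (q x) < Z"
        proof (rule ccontr)
          assume "\<not> (\<exists>x\<ge>N. cmod (q x) < Z)"
          then have "\<forall>x\<ge>N. Z \<le> cmod (q x)" by (auto simp: not_less)
          then have "eventually (\<lambda>x. Z \<le> cmod (q x)) at_top"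
            unfolding eventually_at_top_linorder by blast
          with nev show False by contradiction
        qed
      qed
      define xs where "xs n = (SOME x. x \<ge> real n \<and> cmod (q x) < Z)" for n :: nat
      have xs: "xs n \<ge> real n \<and> cmod (q (xs n)) < Z" for n
      proof -
        have "\<exists>x. x \<ge> real n \<and> cmod (q x) < Z" using ex by blast
        then show ?thesis unfolding xs_def by (rule someI_ex)
      qed
      have "bounded (range (\<lambda>n. q (xs n)))"
        unfolding bounded_iff
      proof (intro exI[of _ Z] ballI)
        fix y assume "y \<in> range (\<lambda>n. q (xs n))"
        then obtain n where "y = q (xs n)" by blast
        then show "norm y \<le> Z" using xs[of n] by simp
      qed
      then obtain w r where r: "strict_mono (r :: nat \<Rightarrow> nat)"
        and lw: "((\<lambda>n. q (xs n)) \<circ> r) \<longlonglongrightarrow> w"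
        using bounded_imp_convergent_subsequence by blast
      have "w \<in> setN q" using U by simp
      then obtain x1 where A: "condA (\<lambda>x. q x - w) x1" unfolding setN_def by auto
      obtain C1 where C1: "C1 > 0" and ev1: "\<And>x. x \<ge> x1 \<Longrightarrow> Re (csqrt (q x - w)) \<ge> C1"
        using condA_ev[OF A] by blast
      have lw': "(\<lambda>n. q (xs (r n))) \<longlonglongrightarrow> w" using lw by (simp add: o_def)
      have l0: "(\<lambda>n. q (xs (r n)) - w) \<longlonglongrightarrow> 0"
        by (rule LIM_zero[OF lw'])
      have lim0: "(\<lambda>n. Re (csqrt (q (xs (r n)) - w))) \<longlonglongrightarrow> 0"
      proof -
        have "(\<lambda>n. sqrt ((cmod (q (xs (r n)) - w) + Re (q (xs (r n)) - w)) / 2)) \<longlonglongrightarrow>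
                sqrt ((cmod (0::complex) + Re 0) / 2)"
          by (rule tendsto_real_sqrt[OF tendsto_divide[OF tendsto_add[OF tendsto_norm[OF l0] tendsto_Re[OF l0]] tendsto_const]]) simp
        then show ?thesis by simp
      qed
      have "\<exists>N. \<forall>n\<ge>N. C1 \<le> Re (csqrt (q (xs (r n)) - w))"
      proof (intro exI[of _ "nat \<lceil>x1\<rceil>"] allI impI)
        fix n assume n: "n \<ge> nat \<lceil>x1\<rceil>"
        have "real (r n) \<ge> real n" using seq_suble[OF r, of n] by simp
        moreover have "real n \<ge> x1" using n by linarith
        ultimately have "xs (r n) \<ge> x1" using xs[of "r n"] by linarith
        then show "C1 \<le> Re (csqrt (q (xs (r n)) - w))" by (rule ev1)
      qed
      then have "C1 \<le> 0" by (rule LIMSEQ_le_const[OF lim0])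
      then show False using C1 by simp
    qed
  qed
  show ?thesis using z op iff by auto
qed
end
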